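(* Let $k,\ell \in \mathbb{N}$, and let $G$ be any ordered graph. If $G$ contains no $k$-structure of Type 1, no $k$-structure of Type 2, and no $(k,\ell)$-structure of Type 3, then the vertices of $G$ may be partitioned into blocks $B_1 < \ldots < B_m$ of consecutive vertices, with $m \leqslant 256k^4$ and each block $\ell$-homogeneous.
   Context: An ordered graph of order $n$ has vertex set $[n]$ with the natural order; $\Gamma(x)$ is the neighbourhood of $x$. For sets $A,B$ of vertices, $A<B$ means $a<b$ for all $a\in A$, $b\in B$. For a vertex $x$ and $\ell\in\mathbb{N}$, $N_\ell(x)=\{z\in\mathbb{N}: x-\ell+1\leqslant z\leqslant x+\ell-1\}$. Vertices $x,y$ are $\ell$-homogeneous if $\Gamma(x)\setminus(N_\ell(x)\cup N_\ell(y))=\Gamma(y)\setminus(N_\ell(x)\cup N_\ell(y))$; a set $B$ of consecutive vertices is $\ell$-homogeneous if every two of its vertices are $\ell$-homogeneous. Structures in $G$: a $k$-structure of Type 1 consists of vertices $y$ and $x_1<\dots<x_{2k}$ with $y<x_1$ or $y>x_{2k}$, such that for $1\leqslant i<2k$, $yx_i\in E(G)$ iff $yx_{i+1}\notin E(G)$. A $k$-structure of Type 2(a) consists of vertices $x_1<\dots<x_{2k}<y_1<\dots<y_{2k}$ such that for $1\leqslant i<2k$, $x_iy_i\in E(G)$ iff $x_{i+1}y_{i+1}\notin E(G)$; Type 2(b) is the same but with $x_1<\dots<x_{2k}<y_{2k}<\dots<y_1$; a $k$-structure of Type 2 is one of Type 2(a) or 2(b). A $(k,\ell)$-structure of Type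 3 consists of vertices $x_1<z_{1,1}<\dots<z_{1,\ell-1}<y_1<x_2<z_{2,1}<\dots<z_{2,\ell-1}<y_2<x_3<\dots<y_{2k-1}<x_{2k}<z_{2k,1}<\dots<z_{2k,\ell-1}<y_{2k}$ such that for $1\leqslant i<2k$, $x_iy_i\in E(G)$ iff $x_{i+1}y_{i+1}\notin E(G)$. *)

theory Defs
  imports Main
begin

definition ordered_graph :: "nat \<Rightarrow> (nat \<Rightarrow> nat \<Rightarrow> bool) \<Rightarrow> bool" where
  "ordered_graph n E \<longleftrightarrow> (\<forall>u v. E u v \<longrightarrow> E v u) \<and> (\<forall>u. \<not> E u u)
     \<and> (\<forall>u v. E u v \<longrightarrow> u \<in> {1..n} \<and> v \<in> {1..n})"

definition nbhd :: "nat \<Rightarrow> (nat \<Rightarrow> nat \<Rightarrow> bool) \<Rightarrow> nat \<Rightarrow> nat set" where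
  "nbhd n E x = {z \<in> {1..n}. E x z}"

text \<open>N_l(x) = {z. x - l + 1 \<le> z \<le> x + l - 1}, written without truncated subtraction.\<close>
definition Nl :: "nat \<Rightarrow> nat \<Rightarrow> nat set" where
  "Nl l x = {z. x + 1 \<le> z + l \<and> z + 1 \<le> x + l}"

definition set_less :: "nat set \<Rightarrow> nat set \<Rightarrow> bool" where
  "set_less A B \<longleftrightarrow> (\<forall>a\<in>A. \<forall>b\<in>B. a < b)"

definition l_homogeneous_pair :: "nat \<Rightarrow> (nat \<Rightarrow> nat \<Rightarrow> bool) \<Rightarrow> nat \<Rightarrow> nat \<Rightarrow> nat \<Rightarrow> bool" where
  "l_homogeneous_pair n E l x y \<longleftrightarrow>
     nbhd n E x - (Nl l x \<union> Nl l y) = nbhd n E y - (Nl l x \<union> Nl l y)"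

definition consecutive :: "nat set \<Rightarrow> bool" where
  "consecutive B \<longleftrightarrow> (\<exists>a b. B = {a..b})"

definition l_homogeneous_set :: "nat \<Rightarrow> (nat \<Rightarrow> nat \<Rightarrow> bool) \<Rightarrow> nat \<Rightarrow> nat set \<Rightarrow> bool" where
  "l_homogeneous_set n E l B \<longleftrightarrow> consecutive B \<and> (\<forall>x\<in>B. \<forall>y\<in>B. l_homogeneous_pair n E l x y)"

text \<open>Sequences x_1 < ... < x_{2k} are functions on indices 1..2k.\<close>
definition incr_seq :: "nat \<Rightarrow> (nat \<Rightarrow> nat) \<Rightarrow> bool" where
  "incr_seq k x \<longleftrightarrow> (\<forall>i. 1 \<le> i \<and> i < 2*k \<longrightarrow> x i < x (i+1))"

definition in_vertices :: "nat \<Rightarrow> nat \<Rightarrow> (nat \<Rightarrow> nat) \<Rightarrow> bool" where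
  "in_vertices n k x \<longleftrightarrow> (\<forall>i\<in>{1..2*k}. x i \<in> {1..n})"

definition has_type1 :: "nat \<Rightarrow> (nat \<Rightarrow> nat \<Rightarrow> bool) \<Rightarrow> nat \<Rightarrow> bool" where
  "has_type1 n E k \<longleftrightarrow> (\<exists>y x. y \<in> {1..n} \<and> in_vertices n k x \<and> incr_seq k x
     \<and> (y < x 1 \<or> y > x (2*k))
     \<and> (\<forall>i. 1 \<le> i \<and> i < 2*k \<longrightarrow> (E y (x i) \<longleftrightarrow> \<not> E y (x (i+1)))))"

definition has_type2a :: "nat \<Rightarrow> (nat \<Rightarrow> nat \<Rightarrow> bool) \<Rightarrow> nat \<Rightarrow> bool" where
  "has_type2a n E k \<longleftrightarrow> (\<exists>x y. in_vertices n k x \<and> in_vertices n k y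
     \<and> incr_seq k x \<and> x (2*k) < y 1 \<and> incr_seq k y
     \<and> (\<forall>i. 1 \<le> i \<and> i < 2*k \<longrightarrow> (E (x i) (y i) \<longleftrightarrow> \<not> E (x (i+1)) (y (i+1)))))"

definition has_type2b :: "nat \<Rightarrow> (nat \<Rightarrow> nat \<Rightarrow> bool) \<Rightarrow> nat \<Rightarrow> bool" where
  "has_type2b n E k \<longleftrightarrow> (\<exists>x y. in_vertices n k x \<and> in_vertices n k y
     \<and> incr_seq k x \<and> x (2*k) < y (2*k) \<and> (\<forall>i. 1 \<le> i \<and> i < 2*k \<longrightarrow> y (i+1) < y i)
     \<and> (\<forall>i. 1 \<le> i \<and> i < 2*k \<longrightarrow> (E (x i) (y i) \<longleftrightarrow> \<not> E (x (i+1)) (y (i+1)))))"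

definition has_type2 :: "nat \<Rightarrow> (nat \<Rightarrow> nat \<Rightarrow> bool) \<Rightarrow> nat \<Rightarrow> bool" where
  "has_type2 n E k \<longleftrightarrow> has_type2a n E k \<or> has_type2b n E k"

definition has_type3 :: "nat \<Rightarrow> (nat \<Rightarrow> nat \<Rightarrow> bool) \<Rightarrow> nat \<Rightarrow> nat \<Rightarrow> bool" where
  "has_type3 n E k l \<longleftrightarrow> (\<exists>x y z. in_vertices n k x \<and> in_vertices n k y
     \<and> (\<forall>i\<in>{1..2*k}. x i < y i
          \<and> (\<forall>j\<in>{1..<l}. z i j \<in> {1..n} \<and> x i < z i j \<and> z i j < y i
                \<and> (j + 1 < l \<longrightarrow> z i j < z i (j+1))))
     \<and> (\<forall>i. 1 \<le> i \<and> i < 2*k \<longrightarrow> y i < x (i+1))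
     \<and> (\<forall>i. 1 \<le> i \<and> i < 2*k \<longrightarrow> (E (x i) (y i) \<longleftrightarrow> \<not> E (x (i+1)) (y (i+1)))))"

end

theory Submission
  imports Defs
begin

definition viol :: "nat \<Rightarrow> (nat \<Rightarrow> nat \<Rightarrow> bool) \<Rightarrow> nat \<Rightarrow> nat \<Rightarrow> nat \<Rightarrow> nat \<Rightarrow> bool" where
  "viol n E l x y z \<longleftrightarrow> 1 \<le> x \<and> x < y \<and> y \<le> n \<and> 1 \<le> z \<and> z \<le> n
     \<and> (z + l \<le> x \<or> x + l \<le> z) \<and> (z + l \<le> y \<or> y + l \<le> z) \<and> (E z x \<noteq> E z y)"

definition sep :: "nat \<Rightarrow> (nat \<Rightarrow> nat \<Rightarrow> bool) \<Rightarrow> nat \<Rightarrow> (nat \<Rightarrow> nat) \<Rightarrow> (nat \<Rightarrow> nat) \<Rightarrow> (nat \<Rightarrow> nat) \<Rightarrow> nat set \<Rightarrow> bool" where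
  "sep n E l X Y Z T \<longleftrightarrow> finite T \<and> (\<forall>i\<in>T. viol n E l (X i) (Y i) (Z i))
     \<and> (\<forall>i\<in>T. \<forall>j\<in>T. i < j \<longrightarrow> Y i < X j)"

lemma enum:
  assumes "finite (C::nat set)" "N \<le> card C"
  shows "\<exists>c. (\<forall>i. 1 \<le> i \<and> i \<le> N \<longrightarrow> c i \<in> C) \<and> (\<forall>i j. 1 \<le> i \<and> i < j \<and> j \<le> N \<longrightarrow> c i < c j)"
proof -
  let ?L = "sorted_list_of_set C"
  have len: "length ?L = card C" by simp
  have st: "sorted_wrt (<) ?L" by simp
  have se: "set ?L = C" using assms(1) by simp
  show ?thesis
  proof (intro exI[of _ "\<lambda>i. ?L ! (i - 1)"] conjI allI impI)
    fix i assume "1 \<le> i \<and> i \<le> N"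
    then have "i - 1 < length ?L" using len assms(2) by linarith
    then show "?L ! (i - 1) \<in> C" using se nth_mem by blast
  next
    fix i j assume h: "1 \<le> i \<and> i < j \<and> j \<le> N"
    then have "j - 1 < length ?L" "i - 1 < j - 1" using len assms(2) by linarith+
    then show "?L ! (i - 1) < ?L ! (j - 1)" using st sorted_wrt_nth_less by blast
  qed
qed

definition sel :: "(nat \<Rightarrow> nat \<Rightarrow> bool) \<Rightarrow> (nat \<Rightarrow> nat) \<Rightarrow> (nat \<Rightarrow> nat) \<Rightarrow> (nat \<Rightarrow> nat) \<Rightarrow> nat \<Rightarrow> bool \<Rightarrow> nat" where
  "sel E X Y Z c b = (if E (Z c) (X c) = b then X c else Y c)"

lemma sel_props:
  fixes n :: nat and E :: "nat \<Rightarrow> nat \<Rightarrow> bool" and l :: nat and X Y Z :: "nat \<Rightarrow> nat" and c :: nat and b :: bool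
  assumes "viol n E l (X c) (Y c) (Z c)"
  shows "E (Z c) (sel E X Y Z c b) = b" "X c \<le> sel E X Y Z c b" "sel E X Y Z c b \<le> Y c"
    "1 \<le> sel E X Y Z c b" "sel E X Y Z c b \<le> n"
  using assms unfolding sel_def viol_def by auto

lemma sym_E: "ordered_graph n E \<Longrightarrow> E u v = E v u"
  unfolding ordered_graph_def by blast

lemma type3_intro:
  assumes "\<And>i. 1 \<le> i \<Longrightarrow> i \<le> 2*k \<Longrightarrow> 1 \<le> xs i \<and> xs i + l \<le> ys i \<and> ys i \<le> n \<and> (E (xs i) (ys i) \<longleftrightarrow> odd i)"
    and "\<And>i. 1 \<le> i \<Longrightarrow> i < 2*k \<Longrightarrow> ys i < xs (i+1)" and "1 \<le> l"
  shows "has_type3 n E k l"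
  unfolding has_type3_def
proof (rule exI[of _ xs], rule exI[of _ ys], rule exI[of _ "\<lambda>i j. xs i + j"], intro conjI)
  show "in_vertices n k xs" "in_vertices n k ys" unfolding in_vertices_def
    using assms(1) by fastforce+
  show "\<forall>i\<in>{1..2 * k}. xs i < ys i \<and> (\<forall>j\<in>{1..<l}. xs i + j \<in> {1..n} \<and> xs i < xs i + j \<and> xs i + j < ys i \<and> (j + 1 < l \<longrightarrow> xs i + j < xs i + (j + 1)))"
  proof
    fix i assume "i \<in> {1..2*k}"
    then have "1 \<le> xs i \<and> xs i + l \<le> ys i \<and> ys i \<le> n" using assms(1) by auto
    then have "1 \<le> xs i \<and> xs i + l \<le> ys i \<and> ys i \<le> n \<and> 1 \<le> l" using assms(3) by auto
    then show "xs i < ys i \<and> (\<forall>j\<in>{1..<l}. xs i + j \<in> {1..n} \<and> xs i < xs i + j \<and> xs i + j < ys i \<and> (j + 1 < l \<longrightarrow> xs i + j < xs i + (j + 1)))"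
      by auto
  qed
  show "\<forall>i. 1 \<le> i \<and> i < 2 * k \<longrightarrow> ys i < xs (i + 1)" using assms(2) by auto
  show "\<forall>i. 1 \<le> i \<and> i < 2 * k \<longrightarrow> E (xs i) (ys i) = (\<not> E (xs (i + 1)) (ys (i + 1)))"
  proof (intro allI impI)
    fix i assume "1 \<le> i \<and> i < 2 * k"
    then have "E (xs i) (ys i) = odd i" "E (xs (i+1)) (ys (i+1)) = odd (i+1)" using assms(1) by auto
    then show "E (xs i) (ys i) = (\<not> E (xs (i + 1)) (ys (i + 1)))" by simp
  qed
qed

lemma mid_bound:
  assumes sp: "sep n E l X Y Z T" and mid: "\<forall>i\<in>T. X i < Z i \<and> Z i < Y i"
    and no3: "\<not> has_type3 n E k l" and og: "ordered_graph n E" and l1: "1 \<le> l"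
  shows "card T < 2*k"
proof (rule ccontr)
  assume "\<not> card T < 2*k"
  then obtain c where c1: "\<And>i. 1 \<le> i \<Longrightarrow> i \<le> 2*k \<Longrightarrow> c i \<in> T"
    and c2: "\<And>i j. 1 \<le> i \<Longrightarrow> i < j \<Longrightarrow> j \<le> 2*k \<Longrightarrow> c i < c j"
    using enum[of T "2*k"] sp unfolding sep_def by (metis not_less)
  define xs where "xs i = (if E (Z (c i)) (X (c i)) = odd i then X (c i) else Z (c i))" for i
  define ys where "ys i = (if E (Z (c i)) (X (c i)) = odd i then Z (c i) else Y (c i))" for i
  have P: "1 \<le> xs i \<and> xs i + l \<le> ys i \<and> ys i \<le> n \<and> (E (xs i) (ys i) \<longleftrightarrow> odd i)
     \<and> X (c i) \<le> xs i \<and> ys i \<le> Y (c i)" if "1 \<le> i" "i \<le> 2*k" for i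
  proof -
    have ci: "c i \<in> T" using c1 that .
    then have v: "viol n E l (X (c i)) (Y (c i)) (Z (c i))" using sp unfolding sep_def by blast
    have m: "X (c i) < Z (c i) \<and> Z (c i) < Y (c i)" using mid ci by blast
    have "E (X (c i)) (Z (c i)) = E (Z (c i)) (X (c i))" "E (Y (c i)) (Z (c i)) = E (Z (c i)) (Y (c i))"
      using sym_E[OF og] by blast+
    then show ?thesis using v m unfolding xs_def ys_def viol_def by auto
  qed
  have "has_type3 n E k l"
  proof (rule type3_intro[OF _ _ l1])
    show "1 \<le> xs i \<and> xs i + l \<le> ys i \<and> ys i \<le> n \<and> (E (xs i) (ys i) \<longleftrightarrow> odd i)" if "1 \<le> i" "i \<le> 2*k" for i
      using P[OF that] by blast
    show "ys i < xs (i+1)" if "1 \<le> i" "i < 2*k" for i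
    proof -
      have "c i \<in> T" "c (i+1) \<in> T" "c i < c (i+1)" using c1 c2 that by auto
      then have "Y (c i) < X (c (i+1))" using sp unfolding sep_def by blast
      then show ?thesis using P[of i] P[of "i+1"] that by linarith
    qed
  qed
  then show False using no3 by blast
qed

lemma type1_intro:
  assumes "1 \<le> y" "y \<le> n"
    and "\<And>i. 1 \<le> i \<Longrightarrow> i \<le> 2*k \<Longrightarrow> 1 \<le> xs i \<and> xs i \<le> n \<and> (E y (xs i) \<longleftrightarrow> odd i)"
    and "\<And>i. 1 \<le> i \<Longrightarrow> i < 2*k \<Longrightarrow> xs i < xs (i+1)"
    and "y < xs 1 \<or> y > xs (2*k)"
  shows "has_type1 n E k"
  unfolding has_type1_def
proof (rule exI[of _ y], rule exI[of _ xs], intro conjI)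
  show "y \<in> {1..n}" using assms by auto
  show "in_vertices n k xs" unfolding in_vertices_def using assms(3) by fastforce
  show "incr_seq k xs" unfolding incr_seq_def using assms(4) by blast
  show "y < xs 1 \<or> xs (2 * k) < y" using assms(5) by blast
  show "\<forall>i. 1 \<le> i \<and> i < 2 * k \<longrightarrow> E y (xs i) = (\<not> E y (xs (i + 1)))"
  proof (intro allI impI)
    fix i assume "1 \<le> i \<and> i < 2 * k"
    then have "E y (xs i) = odd i" "E y (xs (i+1)) = odd (i+1)" using assms(3) by auto
    then show "E y (xs i) = (\<not> E y (xs (i + 1)))" by simp
  qed
qed

lemma type2a_intro:
  assumes "\<And>i. 1 \<le> i \<Longrightarrow> i \<le> 2*k \<Longrightarrow> 1 \<le> xs i \<and> ys i \<le> n \<and> (E (xs i) (ys i) \<longleftrightarrow> odd i)"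
    and "\<And>i. 1 \<le> i \<Longrightarrow> i < 2*k \<Longrightarrow> xs i < xs (i+1)"
    and "\<And>i. 1 \<le> i \<Longrightarrow> i < 2*k \<Longrightarrow> ys i < ys (i+1)"
    and "xs (2*k) < ys 1" and "1 \<le> k"
  shows "has_type2 n E k"
  unfolding has_type2_def has_type2a_def
proof (rule disjI1, rule exI[of _ xs], rule exI[of _ ys], intro conjI)
  have xm: "xs i \<le> xs j" if "1 \<le> i" "i \<le> j" "j \<le> 2*k" for i j
    using that
  proof (induction j)
    case 0 then show ?case by simp
  next
    case (Suc j) then show ?case using assms(2)[of j] by (cases "i = Suc j") (auto)
  qed
  have ym: "ys i \<le> ys j" if "1 \<le> i" "i \<le> j" "j \<le> 2*k" for i j
    using that
  proof (induction j)
    case 0 then show ?case by simp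
  next
    case (Suc j) then show ?case using assms(3)[of j] by (cases "i = Suc j") (auto)
  qed
  have "1 \<le> ys i \<and> xs i \<le> n" if "1 \<le> i" "i \<le> 2*k" for i
  proof -
    have "xs i \<le> xs (2*k)" "ys 1 \<le> ys i" using xm ym that by auto
    moreover have "1 \<le> xs 1" "ys (2*k) \<le> n" using assms(1)[of 1] assms(1)[of "2*k"] assms(5) by auto
    ultimately show ?thesis using assms(4) that assms(1)[of i] by auto
  qed
  then show "in_vertices n k xs" "in_vertices n k ys" unfolding in_vertices_def using assms(1) by fastforce+
  show "incr_seq k xs" "incr_seq k ys" unfolding incr_seq_def using assms(2,3) by blast+
  show "xs (2 * k) < ys 1" by fact
  show "\<forall>i. 1 \<le> i \<and> i < 2 * k \<longrightarrow> E (xs i) (ys i) = (\<not> E (xs (i + 1)) (ys (i + 1)))"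
  proof (intro allI impI)
    fix i assume "1 \<le> i \<and> i < 2 * k"
    then have "E (xs i) (ys i) = odd i" "E (xs (i+1)) (ys (i+1)) = odd (i+1)" using assms(1) by auto
    then show "E (xs i) (ys i) = (\<not> E (xs (i + 1)) (ys (i + 1)))" by simp
  qed
qed

lemma type2b_intro:
  assumes "\<And>i. 1 \<le> i \<Longrightarrow> i \<le> 2*k \<Longrightarrow> 1 \<le> xs i \<and> ys i \<le> n \<and> (E (xs i) (ys i) \<longleftrightarrow> odd i)"
    and "\<And>i. 1 \<le> i \<Longrightarrow> i < 2*k \<Longrightarrow> xs i < xs (i+1)"
    and "\<And>i. 1 \<le> i \<Longrightarrow> i < 2*k \<Longrightarrow> ys (i+1) < ys i"
    and "xs (2*k) < ys (2*k)" and "1 \<le> k"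
  shows "has_type2 n E k"
  unfolding has_type2_def has_type2b_def
proof (rule disjI2, rule exI[of _ xs], rule exI[of _ ys], intro conjI)
  have xm: "xs i \<le> xs j" if "1 \<le> i" "i \<le> j" "j \<le> 2*k" for i j
    using that
  proof (induction j)
    case 0 then show ?case by simp
  next
    case (Suc j) then show ?case using assms(2)[of j] by (cases "i = Suc j") (auto)
  qed
  have ym: "ys j \<le> ys i" if "1 \<le> i" "i \<le> j" "j \<le> 2*k" for i j
    using that
  proof (induction j)
    case 0 then show ?case by simp
  next
    case (Suc j) then show ?case using assms(3)[of j] by (cases "i = Suc j") (auto)
  qed
  have "1 \<le> ys i \<and> xs i \<le> n" if "1 \<le> i" "i \<le> 2*k" for i
  proof -
    have "xs i \<le> xs (2*k)" "ys (2*k) \<le> ys i" using xm ym that by auto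
    moreover have "1 \<le> xs 1" "ys 1 \<le> n" "xs 1 \<le> xs (2*k)" "ys (2*k) \<le> ys 1"
      using assms(1)[of 1] assms(5) xm[of 1 "2*k"] ym[of 1 "2*k"] by auto
    ultimately show ?thesis using assms(4) that assms(1)[of i] by auto
  qed
  then show "in_vertices n k xs" "in_vertices n k ys" unfolding in_vertices_def using assms(1) by fastforce+
  show "incr_seq k xs" unfolding incr_seq_def using assms(2) by blast
  show "\<forall>i. 1 \<le> i \<and> i < 2 * k \<longrightarrow> ys (i + 1) < ys i" using assms(3) by blast
  show "xs (2 * k) < ys (2*k)" by fact
  show "\<forall>i. 1 \<le> i \<and> i < 2 * k \<longrightarrow> E (xs i) (ys i) = (\<not> E (xs (i + 1)) (ys (i + 1)))"
  proof (intro allI impI)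
    fix i assume "1 \<le> i \<and> i < 2 * k"
    then have "E (xs i) (ys i) = odd i" "E (xs (i+1)) (ys (i+1)) = odd (i+1)" using assms(1) by auto
    then show "E (xs i) (ys i) = (\<not> E (xs (i + 1)) (ys (i + 1)))" by simp
  qed
qed

lemma sep_enum:
  assumes "sep n E l X Y Z T" "C \<subseteq> T" "N \<le> card C"
  shows "\<exists>c. (\<forall>i. 1 \<le> i \<and> i \<le> N \<longrightarrow> c i \<in> C \<and> viol n E l (X (c i)) (Y (c i)) (Z (c i)))
     \<and> (\<forall>i j. 1 \<le> i \<and> i < j \<and> j \<le> N \<longrightarrow> c i < c j \<and> Y (c i) < X (c j))"
proof -
  have "finite C" using assms(1,2) unfolding sep_def using finite_subset by blast
  then obtain c where c1: "\<forall>i. 1 \<le> i \<and> i \<le> N \<longrightarrow> c i \<in> C"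
    and c2: "\<forall>i j. 1 \<le> i \<and> i < j \<and> j \<le> N \<longrightarrow> c i < c j"
    using enum[of C N] assms(3) by blast
  show ?thesis
  proof (rule exI[of _ c], rule conjI)
    show "\<forall>i. 1 \<le> i \<and> i \<le> N \<longrightarrow> c i \<in> C \<and> viol n E l (X (c i)) (Y (c i)) (Z (c i))"
      using c1 assms(1,2) unfolding sep_def by blast
    show "\<forall>i j. 1 \<le> i \<and> i < j \<and> j \<le> N \<longrightarrow> c i < c j \<and> Y (c i) < X (c j)"
    proof (intro allI impI)
      fix i j assume h: "1 \<le> i \<and> i < j \<and> j \<le> N"
      then have "c i \<in> T" "c j \<in> T" "c i < c j" using c1 c2 assms(2) by auto
      then show "c i < c j \<and> Y (c i) < X (c j)" using assms(1) unfolding sep_def by blast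
    qed
  qed
qed

lemma right_const:
  assumes sp: "sep n E l X Y Z T" and R: "\<forall>i\<in>T. Y i < Z i" and CT: "C \<subseteq> T"
    and cst: "\<forall>i\<in>C. \<forall>j\<in>C. Z i = Z j" and no1: "\<not> has_type1 n E k" and k1: "1 \<le> k"
  shows "card C < 2*k"
proof (rule ccontr)
  assume "\<not> card C < 2*k"
  then obtain c where c1: "\<And>i. 1 \<le> i \<Longrightarrow> i \<le> 2*k \<Longrightarrow> c i \<in> C \<and> viol n E l (X (c i)) (Y (c i)) (Z (c i))"
    and c2: "\<And>i j. 1 \<le> i \<Longrightarrow> i < j \<Longrightarrow> j \<le> 2*k \<Longrightarrow> c i < c j \<and> Y (c i) < X (c j)"
    using sep_enum[OF sp CT, of "2*k"] by (metis not_less)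
  define xs where "xs i = sel E X Y Z (c i) (odd i)" for i
  define y where "y = Z (c 1)"
  have "has_type1 n E k"
  proof (rule type1_intro)
    show "1 \<le> y" "y \<le> n" using c1[of 1] k1 unfolding y_def viol_def by auto
    show "1 \<le> xs i \<and> xs i \<le> n \<and> (E y (xs i) \<longleftrightarrow> odd i)" if "1 \<le> i" "i \<le> 2*k" for i
    proof -
      have "Z (c i) = y" using c1[OF that] c1[of 1] k1 cst unfolding y_def by auto
      then show ?thesis using sel_props[of n E l X "c i" Y Z "odd i"] c1[OF that] unfolding xs_def by auto
    qed
    show "xs i < xs (i+1)" if "1 \<le> i" "i < 2*k" for i
    proof -
      have "Y (c i) < X (c (i+1))" using c2[of i "i+1"] that by auto
      moreover have "xs i \<le> Y (c i)" using sel_props(3)[of n E l X "c i" Y Z "odd i"] c1[of i] that unfolding xs_def by auto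
      moreover have "X (c (i+1)) \<le> xs (i+1)" using sel_props(2)[of n E l X "c (i+1)" Y Z "odd (i+1)"] c1[of "i+1"] that unfolding xs_def by auto
      ultimately show ?thesis by linarith
    qed
    have "xs (2*k) < y"
    proof -
      have a: "c (2*k) \<in> C \<and> viol n E l (X (c (2*k))) (Y (c (2*k))) (Z (c (2*k)))" using c1[of "2*k"] k1 by auto
      have "xs (2*k) \<le> Y (c (2*k))" using sel_props(3)[of n E l X "c (2*k)" Y Z "odd (2*k)"] a unfolding xs_def by auto
      moreover have "Y (c (2*k)) < Z (c (2*k))" using R CT a by blast
      moreover have "Z (c (2*k)) = y" using a c1[of 1] k1 cst unfolding y_def by auto
      ultimately show ?thesis by linarith
    qed
    then show "y < xs 1 \<or> y > xs (2*k)" by blast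
  qed
  then show False using no1 by blast
qed

lemma sel_lt:
  assumes "viol n E l (X p) (Y p) (Z p)" "viol n E l (X q) (Y q) (Z q)" "Y p < X q"
  shows "sel E X Y Z p b < sel E X Y Z q b'"
  using sel_props(3)[of n E l X p Y Z b] sel_props(2)[of n E l X q Y Z b'] assms by linarith

lemma jt_arith:
  assumes "1 \<le> (t::nat)" "t \<le> 2*k"
  shows "2*k*(t-1)+1 \<le> 4*k*k" "t < 2*k \<Longrightarrow> 2*k*(t-1)+1 + 2*k = 2*k*((t+1)-1)+1"
    "t < 2*k \<Longrightarrow> 2*k*(t-1)+1 + 2*k \<le> 4*k*k"
proof -
  have "2*k*(t-1) \<le> 2*k*(2*k-1)" using assms by (intro mult_le_mono2) linarith
  also have "\<dots> = 4*k*k - 2*k" by (simp add: algebra_simps right_diff_distrib')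
  finally have a: "2*k*(t-1) \<le> 4*k*k - 2*k" .
  have k1: "1 \<le> k" using assms by auto
  have "2*k*1 \<le> 2*k*(2*k)" using k1 by (intro mult_le_mono2) auto
  then have b: "2*k \<le> 4*k*k" by (simp add: algebra_simps)
  show "2*k*(t-1)+1 \<le> 4*k*k" using a b k1 by linarith
  show "t < 2*k \<Longrightarrow> 2*k*(t-1)+1 + 2*k = 2*k*((t+1)-1)+1" using assms by (cases t) (auto simp: algebra_simps)
  show "t < 2*k \<Longrightarrow> 2*k*(t-1)+1 + 2*k \<le> 4*k*k"
  proof -
    assume "t < 2*k"
    then have "2*k*t \<le> 2*k*(2*k-1)" by (intro mult_le_mono2) linarith
    also have "\<dots> = 4*k*k - 2*k" by (simp add: algebra_simps right_diff_distrib')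
    finally have "2*k*t \<le> 4*k*k - 2*k" .
    moreover have "2*k*(t-1) + 2*k = 2*k*t" using assms by (cases t) (auto simp: algebra_simps)
    ultimately show ?thesis using b k1 by linarith
  qed
qed

lemma right_dec:
  assumes sp: "sep n E l X Y Z T" and R: "\<forall>i\<in>T. Y i < Z i" and CT: "C \<subseteq> T"
    and dec: "\<forall>i\<in>C. \<forall>j\<in>C. i < j \<longrightarrow> Z j < Z i" and no2: "\<not> has_type2 n E k" and k1: "1 \<le> k"
    and og: "ordered_graph n E"
  shows "card C < 2*k"
proof (rule ccontr)
  assume "\<not> card C < 2*k"
  then obtain c where c1: "\<And>i. 1 \<le> i \<Longrightarrow> i \<le> 2*k \<Longrightarrow> c i \<in> C \<and> viol n E l (X (c i)) (Y (c i)) (Z (c i))"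
    and c2: "\<And>i j. 1 \<le> i \<Longrightarrow> i < j \<Longrightarrow> j \<le> 2*k \<Longrightarrow> c i < c j \<and> Y (c i) < X (c j)"
    using sep_enum[OF sp CT, of "2*k"] by (metis not_less)
  define xs where "xs i = sel E X Y Z (c i) (odd i)" for i
  define ys where "ys i = Z (c i)" for i
  have "has_type2 n E k"
  proof (rule type2b_intro[OF _ _ _ _ k1])
    show "1 \<le> xs i \<and> ys i \<le> n \<and> (E (xs i) (ys i) \<longleftrightarrow> odd i)" if "1 \<le> i" "i \<le> 2*k" for i
      using sel_props[of n E l X "c i" Y Z "odd i"] c1[OF that] sym_E[OF og, of "xs i" "ys i"]
      unfolding xs_def ys_def viol_def by auto
    show "xs i < xs (i+1)" if "1 \<le> i" "i < 2*k" for i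
      unfolding xs_def by (rule sel_lt[of n E l]) (use c1 c2 that in auto)
    show "ys (i+1) < ys i" if "1 \<le> i" "i < 2*k" for i
      using c1[of i] c1[of "i+1"] c2[of i "i+1"] that dec unfolding ys_def by auto
    have a: "c (2*k) \<in> C \<and> viol n E l (X (c (2*k))) (Y (c (2*k))) (Z (c (2*k)))" using c1[of "2*k"] k1 by auto
    then show "xs (2*k) < ys (2*k)"
      using sel_props(3)[of n E l X "c (2*k)" Y Z "odd (2*k)"] R CT unfolding xs_def ys_def
      by (meson le_less_trans subsetD)
  qed
  then show False using no2 by blast
qed

lemma left_const:
  assumes sp: "sep n E l X Y Z T" and L: "\<forall>i\<in>T. Z i < X i" and CT: "C \<subseteq> T"
    and cst: "\<forall>i\<in>C. \<forall>j\<in>C. Z i = Z j" and no1: "\<not> has_type1 n E k" and k1: "1 \<le> k"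
  shows "card C < 2*k"
proof (rule ccontr)
  assume "\<not> card C < 2*k"
  then obtain c where c1: "\<And>i. 1 \<le> i \<Longrightarrow> i \<le> 2*k \<Longrightarrow> c i \<in> C \<and> viol n E l (X (c i)) (Y (c i)) (Z (c i))"
    and c2: "\<And>i j. 1 \<le> i \<Longrightarrow> i < j \<Longrightarrow> j \<le> 2*k \<Longrightarrow> c i < c j \<and> Y (c i) < X (c j)"
    using sep_enum[OF sp CT, of "2*k"] by (metis not_less)
  define xs where "xs i = sel E X Y Z (c i) (odd i)" for i
  define y where "y = Z (c 1)"
  have "has_type1 n E k"
  proof (rule type1_intro)
    show "1 \<le> y" "y \<le> n" using c1[of 1] k1 unfolding y_def viol_def by auto
    show "1 \<le> xs i \<and> xs i \<le> n \<and> (E y (xs i) \<longleftrightarrow> odd i)" if "1 \<le> i" "i \<le> 2*k" for i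
    proof -
      have "Z (c i) = y" using c1[OF that] c1[of 1] k1 cst unfolding y_def by auto
      then show ?thesis using sel_props[of n E l X "c i" Y Z "odd i"] c1[OF that] unfolding xs_def by auto
    qed
    show "xs i < xs (i+1)" if "1 \<le> i" "i < 2*k" for i
      unfolding xs_def by (rule sel_lt[of n E l]) (use c1 c2 that in auto)
    have a: "c 1 \<in> C \<and> viol n E l (X (c 1)) (Y (c 1)) (Z (c 1))" using c1[of 1] k1 by auto
    then have "y < xs 1"
      using sel_props(2)[of n E l X "c 1" Y Z "odd 1"] L CT unfolding xs_def y_def
      by (meson less_le_trans subsetD)
    then show "y < xs 1 \<or> y > xs (2*k)" by blast
  qed
  then show False using no1 by blast
qed

lemma left_dec:
  assumes sp: "sep n E l X Y Z T" and L: "\<forall>i\<in>T. Z i < X i" and CT: "C \<subseteq> T"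
    and dec: "\<forall>i\<in>C. \<forall>j\<in>C. i < j \<longrightarrow> Z j < Z i" and no2: "\<not> has_type2 n E k" and k1: "1 \<le> k"
  shows "card C < 2*k"
proof (rule ccontr)
  assume "\<not> card C < 2*k"
  then obtain c where c1: "\<And>i. 1 \<le> i \<Longrightarrow> i \<le> 2*k \<Longrightarrow> c i \<in> C \<and> viol n E l (X (c i)) (Y (c i)) (Z (c i))"
    and c2: "\<And>i j. 1 \<le> i \<Longrightarrow> i < j \<Longrightarrow> j \<le> 2*k \<Longrightarrow> c i < c j \<and> Y (c i) < X (c j)"
    using sep_enum[OF sp CT, of "2*k"] by (metis not_less)
  define xs where "xs i = Z (c (2*k+1-i))" for i
  define ys where "ys i = sel E X Y Z (c (2*k+1-i)) (odd i)" for i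
  have "has_type2 n E k"
  proof (rule type2b_intro[OF _ _ _ _ k1])
    show "1 \<le> xs i \<and> ys i \<le> n \<and> (E (xs i) (ys i) \<longleftrightarrow> odd i)" if "1 \<le> i" "i \<le> 2*k" for i
    proof -
      have "1 \<le> 2*k+1-i" "2*k+1-i \<le> 2*k" using that by auto
      then show ?thesis
        using sel_props[of n E l X "c (2*k+1-i)" Y Z "odd i"] c1[of "2*k+1-i"]
        unfolding xs_def ys_def viol_def by auto
    qed
    show "xs i < xs (i+1)" if "1 \<le> i" "i < 2*k" for i
    proof -
      have e: "2*k+1-(i+1) = 2*k - i" "1 \<le> 2*k - i" "2*k-i < 2*k+1-i" "2*k+1-i \<le> 2*k" using that by auto
      then have "c (2*k-i) \<in> C" "c (2*k+1-i) \<in> C" "c (2*k-i) < c (2*k+1-i)"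
        using c1[of "2*k-i"] c1[of "2*k+1-i"] c2[of "2*k-i" "2*k+1-i"] by auto
      then show ?thesis using dec e unfolding xs_def by auto
    qed
    show "ys (i+1) < ys i" if "1 \<le> i" "i < 2*k" for i
    proof -
      have e: "2*k+1-(i+1) = 2*k - i" "1 \<le> 2*k - i" "2*k-i < 2*k+1-i" "2*k+1-i \<le> 2*k" using that by auto
      show ?thesis unfolding ys_def e(1) by (rule sel_lt[of n E l]) (use c1 c2 e in auto)
    qed
    have a: "c 1 \<in> C \<and> viol n E l (X (c 1)) (Y (c 1)) (Z (c 1))" using c1[of 1] k1 by auto
    then show "xs (2*k) < ys (2*k)"
      using sel_props(2)[of n E l X "c 1" Y Z "odd (2*k)"] L CT unfolding xs_def ys_def
      by (simp, meson less_le_trans subsetD)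
  qed
  then show False using no2 by blast
qed

lemma right_inc:
  assumes sp: "sep n E l X Y Z T" and R: "\<forall>i\<in>T. Y i < Z i" and CT: "C \<subseteq> T"
    and inc: "\<forall>i\<in>C. \<forall>j\<in>C. i < j \<longrightarrow> Z i < Z j" and no2: "\<not> has_type2 n E k"
    and no3: "\<not> has_type3 n E k l" and k1: "1 \<le> k" and l1: "1 \<le> l"
    and og: "ordered_graph n E"
  shows "card C < 4*k*k"
proof (rule ccontr)
  assume "\<not> card C < 4*k*k"
  then obtain c where c1: "\<And>i. 1 \<le> i \<Longrightarrow> i \<le> 4*k*k \<Longrightarrow> c i \<in> C \<and> viol n E l (X (c i)) (Y (c i)) (Z (c i))"
    and c2: "\<And>i j. 1 \<le> i \<Longrightarrow> i < j \<Longrightarrow> j \<le> 4*k*k \<Longrightarrow> c i < c j \<and> Y (c i) < X (c j)"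
    using sep_enum[OF sp CT, of "4*k*k"] by (metis not_less)
  show False
  proof (cases "\<exists>j. 1 \<le> j \<and> j + 2*k - 1 \<le> 4*k*k \<and> Y (c (j+2*k-1)) < Z (c j)")
    case True
    then obtain j where j: "1 \<le> j" "j + 2*k - 1 \<le> 4*k*k" "Y (c (j+2*k-1)) < Z (c j)" by blast
    define xs where "xs i = sel E X Y Z (c (j+i-1)) (odd i)" for i
    define ys where "ys i = Z (c (j+i-1))" for i
    have "has_type2 n E k"
    proof (rule type2a_intro[OF _ _ _ _ k1])
      show "1 \<le> xs i \<and> ys i \<le> n \<and> (E (xs i) (ys i) \<longleftrightarrow> odd i)" if "1 \<le> i" "i \<le> 2*k" for i
      proof -
        have "1 \<le> j+i-1" "j+i-1 \<le> 4*k*k" using that j by auto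
        then show ?thesis
          using sel_props[of n E l X "c (j+i-1)" Y Z "odd i"] c1[of "j+i-1"] sym_E[OF og, of "xs i" "ys i"]
          unfolding xs_def ys_def viol_def by auto
      qed
      show "xs i < xs (i+1)" if "1 \<le> i" "i < 2*k" for i
      proof -
        have e: "j+(i+1)-1 = j+i" "1 \<le> j+i-1" "j+i-1 < j+i" "j+i \<le> 4*k*k" using that j by auto
        show ?thesis unfolding xs_def e(1) by (rule sel_lt[of n E l]) (use c1 c2 e in auto)
      qed
      show "ys i < ys (i+1)" if "1 \<le> i" "i < 2*k" for i
      proof -
        have e: "j+(i+1)-1 = j+i" "1 \<le> j+i-1" "j+i-1 < j+i" "j+i \<le> 4*k*k" using that j by auto
        then have "c (j+i-1) \<in> C" "c (j+i) \<in> C" "c (j+i-1) < c (j+i)"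
          using c1[of "j+i-1"] c1[of "j+i"] c2[of "j+i-1" "j+i"] by auto
        then show ?thesis using inc e unfolding ys_def by auto
      qed
      have a: "viol n E l (X (c (j+2*k-1))) (Y (c (j+2*k-1))) (Z (c (j+2*k-1)))" using c1[of "j+2*k-1"] j k1 by auto
      have "xs (2*k) \<le> Y (c (j+2*k-1))"
        using sel_props(3)[of n E l X "c (j+2*k-1)" Y Z "odd (2*k)"] a unfolding xs_def by auto
      then show "xs (2*k) < ys 1" using j unfolding ys_def by auto
    qed
    then show False using no2 by blast
  next
    case False
    then have F: "\<And>j. 1 \<le> j \<Longrightarrow> j + 2*k - 1 \<le> 4*k*k \<Longrightarrow> Z (c j) \<le> Y (c (j+2*k-1))" by (meson not_less)
    define jt where "jt t = 2*k*(t-1)+1" for t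
    define xs where "xs t = sel E X Y Z (c (jt t)) (odd t)" for t
    define ys where "ys t = Z (c (jt t))" for t
    have "has_type3 n E k l"
    proof (rule type3_intro[OF _ _ l1])
      show "1 \<le> xs t \<and> xs t + l \<le> ys t \<and> ys t \<le> n \<and> (E (xs t) (ys t) \<longleftrightarrow> odd t)" if "1 \<le> t" "t \<le> 2*k" for t
      proof -
        have "1 \<le> jt t" "jt t \<le> 4*k*k" using jt_arith(1)[OF that] unfolding jt_def by auto
        then have a: "c (jt t) \<in> C \<and> viol n E l (X (c (jt t))) (Y (c (jt t))) (Z (c (jt t)))" using c1 by blast
        then have "Y (c (jt t)) < Z (c (jt t))" using R CT by blast
        then show ?thesis
          using sel_props[of n E l X "c (jt t)" Y Z "odd t"] a sym_E[OF og, of "xs t" "ys t"]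
          unfolding xs_def ys_def viol_def by auto
      qed
      show "ys t < xs (t+1)" if "1 \<le> t" "t < 2*k" for t
      proof -
        have t2: "t \<le> 2*k" using that by auto
        have e1: "jt t + 2*k = jt (t+1)" using jt_arith(2)[OF that(1) t2 that(2)] unfolding jt_def by simp
        have e2: "jt t + 2*k \<le> 4*k*k" using jt_arith(3)[OF that(1) t2 that(2)] unfolding jt_def by simp
        have e3: "1 \<le> jt t" unfolding jt_def by simp
        have "ys t \<le> Y (c (jt t + 2*k - 1))" unfolding ys_def using F[OF e3] e2 by auto
        also have "\<dots> < X (c (jt t + 2*k))" using c2[of "jt t + 2*k - 1" "jt t + 2*k"] e2 e3 k1 by auto
        also have "\<dots> \<le> xs (t+1)" unfolding xs_def e1[symmetric]
          using sel_props(2)[of n E l X "c (jt t + 2*k)" Y Z "odd (t+1)"] c1[of "jt t + 2*k"] e2 e3 by auto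
        finally show ?thesis .
      qed
    qed
    then show False using no3 by blast
  qed
qed

lemma left_inc:
  assumes sp: "sep n E l X Y Z T" and L: "\<forall>i\<in>T. Z i < X i" and CT: "C \<subseteq> T"
    and inc: "\<forall>i\<in>C. \<forall>j\<in>C. i < j \<longrightarrow> Z i < Z j" and no2: "\<not> has_type2 n E k"
    and no3: "\<not> has_type3 n E k l" and k1: "1 \<le> k" and l1: "1 \<le> l"
  shows "card C < 4*k*k"
proof (rule ccontr)
  assume "\<not> card C < 4*k*k"
  then obtain c where c1: "\<And>i. 1 \<le> i \<Longrightarrow> i \<le> 4*k*k \<Longrightarrow> c i \<in> C \<and> viol n E l (X (c i)) (Y (c i)) (Z (c i))"
    and c2: "\<And>i j. 1 \<le> i \<Longrightarrow> i < j \<Longrightarrow> j \<le> 4*k*k \<Longrightarrow> c i < c j \<and> Y (c i) < X (c j)"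
    using sep_enum[OF sp CT, of "4*k*k"] by (metis not_less)
  show False
  proof (cases "\<exists>j. 1 \<le> j \<and> j + 2*k - 1 \<le> 4*k*k \<and> Z (c (j+2*k-1)) < X (c j)")
    case True
    then obtain j where j: "1 \<le> j" "j + 2*k - 1 \<le> 4*k*k" "Z (c (j+2*k-1)) < X (c j)" by blast
    define xs where "xs i = Z (c (j+i-1))" for i
    define ys where "ys i = sel E X Y Z (c (j+i-1)) (odd i)" for i
    have "has_type2 n E k"
    proof (rule type2a_intro[OF _ _ _ _ k1])
      show "1 \<le> xs i \<and> ys i \<le> n \<and> (E (xs i) (ys i) \<longleftrightarrow> odd i)" if "1 \<le> i" "i \<le> 2*k" for i
      proof -
        have "1 \<le> j+i-1" "j+i-1 \<le> 4*k*k" using that j by auto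
        then show ?thesis
          using sel_props[of n E l X "c (j+i-1)" Y Z "odd i"] c1[of "j+i-1"]
          unfolding xs_def ys_def viol_def by auto
      qed
      show "ys i < ys (i+1)" if "1 \<le> i" "i < 2*k" for i
      proof -
        have e: "j+(i+1)-1 = j+i" "1 \<le> j+i-1" "j+i-1 < j+i" "j+i \<le> 4*k*k" using that j by auto
        show ?thesis unfolding ys_def e(1) by (rule sel_lt[of n E l]) (use c1 c2 e in auto)
      qed
      show "xs i < xs (i+1)" if "1 \<le> i" "i < 2*k" for i
      proof -
        have e: "j+(i+1)-1 = j+i" "1 \<le> j+i-1" "j+i-1 < j+i" "j+i \<le> 4*k*k" using that j by auto
        then have "c (j+i-1) \<in> C" "c (j+i) \<in> C" "c (j+i-1) < c (j+i)"
          using c1[of "j+i-1"] c1[of "j+i"] c2[of "j+i-1" "j+i"] by auto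
        then show ?thesis using inc e unfolding xs_def by auto
      qed
      have a: "viol n E l (X (c j)) (Y (c j)) (Z (c j))" using c1[of j] j k1 by auto
      have "X (c j) \<le> ys 1"
        using sel_props(2)[of n E l X "c j" Y Z "odd 1"] a unfolding ys_def by auto
      then show "xs (2*k) < ys 1" using j unfolding xs_def by auto
    qed
    then show False using no2 by blast
  next
    case False
    then have F: "\<And>j. 1 \<le> j \<Longrightarrow> j + 2*k - 1 \<le> 4*k*k \<Longrightarrow> X (c j) \<le> Z (c (j+2*k-1))" by (meson not_less)
    define jt where "jt t = 2*k*(t-1)+1" for t
    define xs where "xs t = Z (c (jt t))" for t
    define ys where "ys t = sel E X Y Z (c (jt t)) (odd t)" for t
    have "has_type3 n E k l"
    proof (rule type3_intro[OF _ _ l1])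
      show "1 \<le> xs t \<and> xs t + l \<le> ys t \<and> ys t \<le> n \<and> (E (xs t) (ys t) \<longleftrightarrow> odd t)" if "1 \<le> t" "t \<le> 2*k" for t
      proof -
        have "1 \<le> jt t" "jt t \<le> 4*k*k" using jt_arith(1)[OF that] unfolding jt_def by auto
        then have a: "c (jt t) \<in> C \<and> viol n E l (X (c (jt t))) (Y (c (jt t))) (Z (c (jt t)))" using c1 by blast
        then have "Z (c (jt t)) < X (c (jt t))" using L CT by blast
        then show ?thesis
          using sel_props[of n E l X "c (jt t)" Y Z "odd t"] a
          unfolding xs_def ys_def viol_def by auto
      qed
      show "ys t < xs (t+1)" if "1 \<le> t" "t < 2*k" for t
      proof -
        have t2: "t \<le> 2*k" using that by auto
        have e1: "jt t + 2*k = jt (t+1)" using jt_arith(2)[OF that(1) t2 that(2)] unfolding jt_def by simp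
        have e2: "jt t + 2*k \<le> 4*k*k" using jt_arith(3)[OF that(1) t2 that(2)] unfolding jt_def by simp
        have e3: "1 \<le> jt t" unfolding jt_def by simp
        have "ys t \<le> Y (c (jt t))" unfolding ys_def
          using sel_props(3)[of n E l X "c (jt t)" Y Z "odd t"] c1[of "jt t"] e2 e3 by auto
        also have "\<dots> < X (c (jt t + 1))" using c2[of "jt t" "jt t + 1"] e2 e3 k1 by auto
        also have "\<dots> \<le> Z (c (jt t + 1 + 2*k - 1))" using F[of "jt t + 1"] e2 by auto
        also have "\<dots> = xs (t+1)" unfolding xs_def e1[symmetric] by simp
        finally show ?thesis .
      qed
    qed
    then show False using no3 by blast
  qed
qed

definition chainr :: "(nat \<Rightarrow> nat \<Rightarrow> bool) \<Rightarrow> nat set \<Rightarrow> bool" where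
  "chainr rel C \<longleftrightarrow> (\<forall>x\<in>C. \<forall>y\<in>C. x < y \<longrightarrow> rel x y)"

definition lab :: "nat set \<Rightarrow> (nat \<Rightarrow> nat \<Rightarrow> bool) \<Rightarrow> nat \<Rightarrow> nat" where
  "lab T rel i = Max {card C | C. C \<subseteq> T \<and> chainr rel C \<and> i \<in> C \<and> (\<forall>c\<in>C. c \<le> i)}"

lemma lab_props:
  assumes "finite T" "i \<in> T"
  shows "\<exists>C. C \<subseteq> T \<and> chainr rel C \<and> i \<in> C \<and> (\<forall>c\<in>C. c \<le> i) \<and> card C = lab T rel i"
    "C \<subseteq> T \<Longrightarrow> chainr rel C \<Longrightarrow> i \<in> C \<Longrightarrow> (\<forall>c\<in>C. c \<le> i) \<Longrightarrow> card C \<le> lab T rel i"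
proof -
  define S where "S = {card C | C. C \<subseteq> T \<and> chainr rel C \<and> i \<in> C \<and> (\<forall>c\<in>C. c \<le> i)}"
  have sub: "S \<subseteq> card ` Pow T"
  proof
    fix x assume "x \<in> S"
    then obtain C where "x = card C" "C \<subseteq> T" unfolding S_def by blast
    then show "x \<in> card ` Pow T" by blast
  qed
  have fin: "finite S" by (rule finite_subset[OF sub]) (simp add: assms(1))
  have "{i} \<subseteq> T \<and> chainr rel {i} \<and> i \<in> {i} \<and> (\<forall>c\<in>{i}. c \<le> i)" using assms(2) unfolding chainr_def by simp
  then have "card {i} \<in> S" unfolding S_def by blast
  then have ne: "S \<noteq> {}" by blast
  have lS: "lab T rel i = Max S" unfolding lab_def S_def by simp
  have "Max S \<in> S" using Max_in[OF fin ne] .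
  then obtain D where "D \<subseteq> T \<and> chainr rel D \<and> i \<in> D \<and> (\<forall>c\<in>D. c \<le> i)" "Max S = card D"
    unfolding S_def by blast
  then show "\<exists>C. C \<subseteq> T \<and> chainr rel C \<and> i \<in> C \<and> (\<forall>c\<in>C. c \<le> i) \<and> card C = lab T rel i"
    using lS by metis
  show "card C \<le> lab T rel i" if "C \<subseteq> T" "chainr rel C" "i \<in> C" "\<forall>c\<in>C. c \<le> i"
  proof -
    have "card C \<in> S" unfolding S_def using that by blast
    then show ?thesis using Max_ge[OF fin] lS by simp
  qed
qed

lemma lab_mono:
  assumes "finite T" "i \<in> T" "j \<in> T" "i < j" "rel i j"
    and tr: "\<And>x y z. rel x y \<Longrightarrow> rel y z \<Longrightarrow> rel x z"
  shows "lab T rel i < lab T rel j"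
proof -
  obtain C where C: "C \<subseteq> T" "chainr rel C" "i \<in> C" "\<forall>c\<in>C. c \<le> i" "card C = lab T rel i"
    using lab_props(1)[OF assms(1,2)] by blast
  have fC: "finite C" using C(1) assms(1) finite_subset by blast
  have jn: "j \<notin> C" using C(4) assms(4) by auto
  have ch: "chainr rel (insert j C)" unfolding chainr_def
  proof (intro ballI impI)
    fix x y assume xy: "x \<in> insert j C" "y \<in> insert j C" "x < y"
    show "rel x y"
    proof (cases "y = j")
      case True
      then have xC: "x \<in> C" using xy by auto
      show ?thesis
      proof (cases "x = i")
        case True then show ?thesis using \<open>y = j\<close> assms(5) by simp
      next
        case False
        then have "x < i" using C(4) xC by force
        then have "rel x i" using C(2) xC C(3) unfolding chainr_def by blast
        then show ?thesis using tr assms(5) \<open>y = j\<close> by blast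
      qed
    next
      case False
      then have yC: "y \<in> C" using xy by auto
      then have "x \<noteq> j" using C(4) assms(4) xy(3) by force
      then have "x \<in> C" using xy by auto
      then show ?thesis using C(2) yC xy(3) unfolding chainr_def by blast
    qed
  qed
  have le: "\<forall>c\<in>insert j C. c \<le> j" using C(4) assms(4) by auto
  have sub: "insert j C \<subseteq> T" using C(1) assms(3) by auto
  have "card (insert j C) \<le> lab T rel j"
    using lab_props(2)[OF assms(1,3) sub ch _ le] by simp
  moreover have "card (insert j C) = lab T rel i + 1" using fC jn C(5) by simp
  ultimately show ?thesis by simp
qed

lemma lab_bound:
  assumes "finite T" "i \<in> T" "\<And>C. C \<subseteq> T \<Longrightarrow> chainr rel C \<Longrightarrow> card C < b"
  shows "lab T rel i < b"
proof -
  obtain C where "C \<subseteq> T" "chainr rel C" "card C = lab T rel i" using lab_props(1)[OF assms(1,2), of rel] by blast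
  then show ?thesis using assms(3) by metis
qed

lemma es:
  fixes T :: "nat set" and f :: "nat \<Rightarrow> nat"
  assumes fin: "finite T"
    and cst: "\<And>C. C \<subseteq> T \<Longrightarrow> (\<forall>i\<in>C. \<forall>j\<in>C. f i = f j) \<Longrightarrow> card C < a"
    and inc: "\<And>C. C \<subseteq> T \<Longrightarrow> (\<forall>i\<in>C. \<forall>j\<in>C. i < j \<longrightarrow> f i < f j) \<Longrightarrow> card C < b"
    and dec: "\<And>C. C \<subseteq> T \<Longrightarrow> (\<forall>i\<in>C. \<forall>j\<in>C. i < j \<longrightarrow> f j < f i) \<Longrightarrow> card C < d"
  shows "card T \<le> b * d * a"
proof -
  define ri where "ri x y = (f x < f y)" for x y
  define rd where "rd x y = (f y < f x)" for x y
  define g where "g i = (lab T ri i, lab T rd i)" for i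
  have gT: "g ` T \<subseteq> {0..<b} \<times> {0..<d}"
  proof
    fix p assume "p \<in> g ` T"
    then obtain i where i: "i \<in> T" "p = g i" by blast
    have "lab T ri i < b"
    proof (rule lab_bound[OF fin i(1)])
      fix C assume "C \<subseteq> T" "chainr ri C"
      then show "card C < b" using inc[of C] unfolding chainr_def ri_def by blast
    qed
    moreover have "lab T rd i < d"
    proof (rule lab_bound[OF fin i(1)])
      fix C assume "C \<subseteq> T" "chainr rd C"
      then show "card C < d" using dec[of C] unfolding chainr_def rd_def by blast
    qed
    ultimately show "p \<in> {0..<b} \<times> {0..<d}" using i unfolding g_def by simp
  qed
  have cg: "card (g ` T) \<le> b * d"
  proof -
    have "card (g ` T) \<le> card ({0..<b} \<times> {0..<d})" by (rule card_mono[OF _ gT]) simp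
    then show ?thesis by (simp add: card_cartesian_product)
  qed
  have key: "f x = f y" if "x \<in> T" "y \<in> T" "x < y" "g x = g y" for x y
  proof (rule ccontr)
    assume "f x \<noteq> f y"
    then have "f x < f y \<or> f y < f x" by linarith
    then show False
    proof
      assume h: "f x < f y"
      have "lab T ri x < lab T ri y"
        by (rule lab_mono[OF fin that(1) that(2) that(3)]) (use h in \<open>simp_all add: ri_def\<close>)
      then show False using that(4) unfolding g_def by simp
    next
      assume h: "f y < f x"
      have "lab T rd x < lab T rd y"
        by (rule lab_mono[OF fin that(1) that(2) that(3)]) (use h in \<open>simp_all add: rd_def\<close>)
      then show False using that(4) unfolding g_def by simp
    qed
  qed
  have fib: "card {i \<in> T. g i = p} \<le> a" for p
  proof -
    have "\<forall>i\<in>{i \<in> T. g i = p}. \<forall>j\<in>{i \<in> T. g i = p}. f i = f j"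
    proof (intro ballI)
      fix i j assume ij: "i \<in> {i \<in> T. g i = p}" "j \<in> {i \<in> T. g i = p}"
      then have ij': "i \<in> T" "j \<in> T" "g i = g j" by auto
      show "f i = f j"
      proof (cases i j rule: linorder_cases)
        case less then show ?thesis using key[OF ij'(1,2) less ij'(3)] by simp
      next
        case equal then show ?thesis by simp
      next
        case greater then show ?thesis using key[OF ij'(2,1) greater ij'(3)[symmetric]] by simp
      qed
    qed
    moreover have "{i \<in> T. g i = p} \<subseteq> T" by blast
    ultimately have "card {i \<in> T. g i = p} < a" using cst by blast
    then show ?thesis by simp
  qed
  have TU: "T = (\<Union>p\<in>g ` T. {i \<in> T. g i = p})" by blast
  have "card T \<le> (\<Sum>p\<in>g ` T. card {i \<in> T. g i = p})"
    by (subst TU, rule card_UN_le) (simp add: fin)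
  also have "\<dots> \<le> (\<Sum>p\<in>g ` T. a)" by (rule sum_mono) (rule fib)
  also have "\<dots> = card (g ` T) * a" by simp
  also have "\<dots> \<le> b * d * a" using cg by simp
  finally show ?thesis .
qed

lemma sep_par:
  assumes V: "\<forall>i\<in>{1..r}. viol n E l (X i) (Y i) (Z i)"
    and S: "\<forall>i\<in>{1..r}. \<forall>j\<in>{1..r}. i < j \<longrightarrow> Y i \<le> X j"
    and T: "T \<subseteq> {1..r}" "\<forall>i\<in>T. even i = q"
  shows "sep n E l X Y Z T"
  unfolding sep_def
proof (intro conjI)
  show "finite T" using T(1) finite_subset by blast
  show "\<forall>i\<in>T. viol n E l (X i) (Y i) (Z i)" using V T(1) by blast
  show "\<forall>i\<in>T. \<forall>j\<in>T. i < j \<longrightarrow> Y i < X j"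
  proof (intro ballI impI)
    fix i j assume ij: "i \<in> T" "j \<in> T" "i < j"
    have "even i = even j" using T(2) ij(1,2) by simp
    then have "i + 1 \<noteq> j" by auto
    then have ij1: "i + 1 < j" using ij(3) by simp
    have mem: "i+1 \<in> {1..r}" "i \<in> {1..r}" "j \<in> {1..r}" using ij ij1 T(1) by auto
    have a: "Y i \<le> X (i+1)" using S mem(1,2) by simp
    have b: "Y (i+1) \<le> X j" using S mem(1,3) ij1 by blast
    have c: "X (i+1) < Y (i+1)" using V mem(1) unfolding viol_def by blast
    show "Y i < X j" using a b c by linarith
  qed
qed

lemma side_bound_R:
  assumes sp: "sep n E l X Y Z T" and R: "\<forall>i\<in>T. Y i < Z i"
    and no1: "\<not> has_type1 n E k" and no2: "\<not> has_type2 n E k"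
    and no3: "\<not> has_type3 n E k l" and k1: "1 \<le> k" and l1: "1 \<le> l" and og: "ordered_graph n E"
  shows "card T \<le> 16 * k^4"
proof -
  have "card T \<le> (4*k*k) * (2*k) * (2*k)"
  proof (rule es[where f = Z])
    show "finite T" using sp unfolding sep_def by blast
    show "card C < 2*k" if "C \<subseteq> T" "\<forall>i\<in>C. \<forall>j\<in>C. Z i = Z j" for C
      using right_const[OF sp R that no1 k1] .
    show "card C < 4*k*k" if "C \<subseteq> T" "\<forall>i\<in>C. \<forall>j\<in>C. i < j \<longrightarrow> Z i < Z j" for C
      using right_inc[OF sp R that no2 no3 k1 l1 og] .
    show "card C < 2*k" if "C \<subseteq> T" "\<forall>i\<in>C. \<forall>j\<in>C. i < j \<longrightarrow> Z j < Z i" for C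
      using right_dec[OF sp R that no2 k1 og] .
  qed
  also have "\<dots> = 16 * k^4" by (simp add: power4_eq_xxxx)
  finally show ?thesis .
qed

lemma side_bound_L:
  assumes sp: "sep n E l X Y Z T" and L: "\<forall>i\<in>T. Z i < X i"
    and no1: "\<not> has_type1 n E k" and no2: "\<not> has_type2 n E k"
    and no3: "\<not> has_type3 n E k l" and k1: "1 \<le> k" and l1: "1 \<le> l"
  shows "card T \<le> 16 * k^4"
proof -
  have "card T \<le> (4*k*k) * (2*k) * (2*k)"
  proof (rule es[where f = Z])
    show "finite T" using sp unfolding sep_def by blast
    show "card C < 2*k" if "C \<subseteq> T" "\<forall>i\<in>C. \<forall>j\<in>C. Z i = Z j" for C
      using left_const[OF sp L that no1 k1] .
    show "card C < 4*k*k" if "C \<subseteq> T" "\<forall>i\<in>C. \<forall>j\<in>C. i < j \<longrightarrow> Z i < Z j" for C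
      using left_inc[OF sp L that no2 no3 k1 l1] .
    show "card C < 2*k" if "C \<subseteq> T" "\<forall>i\<in>C. \<forall>j\<in>C. i < j \<longrightarrow> Z j < Z i" for C
      using left_dec[OF sp L that no2 k1] .
  qed
  also have "\<dots> = 16 * k^4" by (simp add: power4_eq_xxxx)
  finally show ?thesis .
qed

lemma count_chain:
  assumes V: "\<forall>i\<in>{1..r}. viol n E l (X i) (Y i) (Z i)"
    and S: "\<forall>i\<in>{1..r}. \<forall>j\<in>{1..r}. i < j \<longrightarrow> Y i \<le> X j"
    and no1: "\<not> has_type1 n E k" and no2: "\<not> has_type2 n E k"
    and no3: "\<not> has_type3 n E k l" and k1: "1 \<le> k" and l1: "1 \<le> l" and og: "ordered_graph n E"
  shows "r + 1 \<le> 256 * k^4"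
proof -
  define M where "M q = {i \<in> {1..r}. X i < Z i \<and> Z i < Y i \<and> even i = q}" for q
  define R where "R q = {i \<in> {1..r}. Y i < Z i \<and> even i = q}" for q
  define L where "L q = {i \<in> {1..r}. Z i < X i \<and> even i = q}" for q
  have spM: "sep n E l X Y Z (M q)" for q by (rule sep_par[OF V S, of _ q]) (auto simp: M_def)
  have spR: "sep n E l X Y Z (R q)" for q by (rule sep_par[OF V S, of _ q]) (auto simp: R_def)
  have spL: "sep n E l X Y Z (L q)" for q by (rule sep_par[OF V S, of _ q]) (auto simp: L_def)
  have cM: "card (M q) < 2*k" for q by (rule mid_bound[OF spM _ no3 og l1]) (auto simp: M_def)
  have cR: "card (R q) \<le> 16*k^4" for q by (rule side_bound_R[OF spR _ no1 no2 no3 k1 l1 og]) (auto simp: R_def)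
  have cL: "card (L q) \<le> 16*k^4" for q by (rule side_bound_L[OF spL _ no1 no2 no3 k1 l1]) (auto simp: L_def)
  have cover: "{1..r} \<subseteq> M True \<union> M False \<union> R True \<union> R False \<union> L True \<union> L False"
  proof
    fix i assume i: "i \<in> {1..r}"
    then have v: "viol n E l (X i) (Y i) (Z i)" using V by blast
    then have "Z i \<noteq> X i" "Z i \<noteq> Y i" using l1 unfolding viol_def by auto
    then have "(X i < Z i \<and> Z i < Y i) \<or> Y i < Z i \<or> Z i < X i" by linarith
    then show "i \<in> M True \<union> M False \<union> R True \<union> R False \<union> L True \<union> L False"
      using i unfolding M_def R_def L_def by auto
  qed
  have fins: "finite (M q)" "finite (R q)" "finite (L q)" for q unfolding M_def R_def L_def by auto
  have "r = card {1..r}" by simp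
  also have "\<dots> \<le> card (M True \<union> M False \<union> R True \<union> R False \<union> L True \<union> L False)"
    by (rule card_mono) (use fins cover in auto)
  also have "\<dots> \<le> card (M True) + card (M False) + card (R True) + card (R False) + card (L True) + card (L False)"
    by (meson card_Un_le add_le_mono order_trans le_refl)
  also have "\<dots> \<le> (2*k) + (2*k) + 16*k^4 + 16*k^4 + 16*k^4 + 16*k^4"
    using cM[of True] cM[of False] cR[of True] cR[of False] cL[of True] cL[of False] by linarith
  finally have "r \<le> 4*k + 64*k^4" by simp
  moreover have "k \<le> k^4" using k1 by (simp add: self_le_power)
  moreover have "1 \<le> k^4" using k1 by simp
  ultimately show ?thesis by linarith
qed


lemma hpair_sym: "l_homogeneous_pair n E l x y = l_homogeneous_pair n E l y x"
  unfolding l_homogeneous_pair_def by (metis Un_commute)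

lemma hpair_refl: "l_homogeneous_pair n E l x x"
  unfolding l_homogeneous_pair_def by simp

lemma nonhom_viol:
  assumes og: "ordered_graph n E" and "\<not> l_homogeneous_pair n E l x y" "1 \<le> x" "x < y" "y \<le> n"
  shows "\<exists>z. viol n E l x y z"
proof -
  obtain z where z: "(z \<in> nbhd n E x - (Nl l x \<union> Nl l y)) \<noteq> (z \<in> nbhd n E y - (Nl l x \<union> Nl l y))"
    using assms(2) unfolding l_homogeneous_pair_def by blast
  then have "z \<in> {1..n}" "z \<notin> Nl l x" "z \<notin> Nl l y" "E x z \<noteq> E y z" unfolding nbhd_def by auto
  then have "viol n E l x y z" using assms(3-5) sym_E[OF og, of x z] sym_E[OF og, of y z]
    unfolding viol_def Nl_def by auto
  then show ?thesis by blast
qed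

lemma part:
  assumes og: "ordered_graph n E"
  shows "1 \<le> s \<Longrightarrow> s \<le> n \<Longrightarrow> \<exists>(m::nat) B X Y Z. 1 \<le> m
     \<and> (\<forall>i\<in>{1..m}. B i \<noteq> {} \<and> consecutive (B i) \<and> l_homogeneous_set n E l (B i))
     \<and> (\<forall>i\<in>{1..m}. \<forall>j\<in>{1..m}. i < j \<longrightarrow> set_less (B i) (B j))
     \<and> (\<Union>i\<in>{1..m}. B i) = {s..n}
     \<and> (\<forall>i\<in>{1..m-1}. viol n E l (X i) (Y i) (Z i) \<and> s \<le> X i)
     \<and> (\<forall>i\<in>{1..m-1}. \<forall>j\<in>{1..m-1}. i < j \<longrightarrow> Y i \<le> X j)"
proof (induction "n - s" arbitrary: s rule: less_induct)
  case less
  define H where "H b = (\<forall>x\<in>{s..b}. \<forall>y\<in>{s..b}. l_homogeneous_pair n E l x y)" for b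
  define S where "S = {b. s \<le> b \<and> b \<le> n \<and> H b}"
  have finS: "finite S" unfolding S_def by (rule finite_subset[of _ "{..n}"]) auto
  have "H s" unfolding H_def using hpair_refl by (metis atLeastAtMost_singleton singletonD)
  then have sS: "s \<in> S" unfolding S_def using less.prems by simp
  define b where "b = Max S"
  have bS: "b \<in> S" unfolding b_def using Max_in[OF finS] sS by blast
  have bmax: "b' \<le> b" if "b' \<in> S" for b' unfolding b_def using Max_ge[OF finS that] .
  have sb: "s \<le> b" "b \<le> n" "H b" using bS unfolding S_def by auto
  have blk: "{s..b} \<noteq> {} \<and> consecutive {s..b} \<and> l_homogeneous_set n E l {s..b}"
  proof (intro conjI)
    show "{s..b} \<noteq> {}" using sb by simp
    show "consecutive {s..b}" unfolding consecutive_def by blast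
    then show "l_homogeneous_set n E l {s..b}" unfolding l_homogeneous_set_def using sb(3) unfolding H_def by blast
  qed
  show ?case
  proof (cases "b = n")
    case True
    show ?thesis
    proof (rule exI[of _ "1::nat"], rule exI[of _ "\<lambda>_::nat. {s..n}"], rule exI, rule exI, rule exI, intro conjI)
      show "\<forall>i\<in>{1..1::nat}. {s..n} \<noteq> {} \<and> consecutive {s..n} \<and> l_homogeneous_set n E l {s..n}"
        using blk True by simp
      show "\<forall>i\<in>{1..1::nat}. \<forall>j\<in>{1..1}. i < j \<longrightarrow> set_less {s..n} {s..n}" by simp
      show "(\<Union>i\<in>{1..1::nat}. {s..n}) = {s..n}" by simp
    qed simp_all
  next
    case False
    then have bn: "b < n" using sb by auto
    have "\<not> H (b+1)"
    proof
      assume "H (b+1)"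
      then have "b+1 \<in> S" unfolding S_def using sb bn by simp
      then have "b+1 \<le> b" using bmax by blast
      then show False by simp
    qed
    then obtain x y where xy: "x \<in> {s..b+1}" "y \<in> {s..b+1}" "\<not> l_homogeneous_pair n E l x y"
      unfolding H_def by blast
    have "\<exists>x'. x' \<in> {s..b} \<and> \<not> l_homogeneous_pair n E l x' (b+1)"
    proof (cases "x = b+1")
      case True
      then have yb: "y \<noteq> b+1" using xy(3) hpair_refl by blast
      then have "y \<in> {s..b}" using xy(2) by auto
      moreover have "\<not> l_homogeneous_pair n E l y (b+1)" using xy(3) True hpair_sym[of n E l y "b+1"] by simp
      ultimately show ?thesis by blast
    next
      case False
      then have xb: "x \<in> {s..b}" using xy(1) by auto
      show ?thesis
      proof (cases "y = b+1")
        case True then show ?thesis using xb xy(3) by blast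
      next
        case False
        then have "y \<in> {s..b}" using xy(2) by auto
        then show ?thesis using xb xy(3) sb(3) unfolding H_def by blast
      qed
    qed
    then obtain x' where x': "x' \<in> {s..b}" "\<not> l_homogeneous_pair n E l x' (b+1)" by blast
    have x'r: "1 \<le> x'" "x' < b+1" "b+1 \<le> n" using x' less.prems bn by auto
    obtain z where z: "viol n E l x' (b+1) z"
      using nonhom_viol[OF og x'(2) x'r] by blast
    have lt: "n - (b+1) < n - s" using sb bn by auto
    have h1: "1 \<le> b+1" and h2: "b+1 \<le> n" using bn by auto
    note ex = less.hyps[OF lt h1 h2]
    obtain m' B' X' Y' Z' where all: "1 \<le> (m'::nat)
     \<and> (\<forall>i\<in>{1..m'}. B' i \<noteq> {} \<and> consecutive (B' i) \<and> l_homogeneous_set n E l (B' i))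
     \<and> (\<forall>i\<in>{1..m'}. \<forall>j\<in>{1..m'}. i < j \<longrightarrow> set_less (B' i) (B' j))
     \<and> (\<Union>i\<in>{1..m'}. B' i) = {b+1..n}
     \<and> (\<forall>i\<in>{1..m'-1}. viol n E l (X' i) (Y' i) (Z' i) \<and> b+1 \<le> X' i)
     \<and> (\<forall>i\<in>{1..m'-1}. \<forall>j\<in>{1..m'-1}. i < j \<longrightarrow> Y' i \<le> X' j)"
      using ex by (elim exE) iprover
    have m1: "1 \<le> m'" using all by (rule conjunct1)
    have m2: "\<forall>i\<in>{1..m'}. B' i \<noteq> {} \<and> consecutive (B' i) \<and> l_homogeneous_set n E l (B' i)"
      using all by (elim conjE)
    have m3: "\<forall>i\<in>{1..m'}. \<forall>j\<in>{1..m'}. i < j \<longrightarrow> set_less (B' i) (B' j)" using all by (elim conjE)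
    have m4: "(\<Union>i\<in>{1..m'}. B' i) = {b+1..n}" using all by (elim conjE)
    have m5: "\<forall>i\<in>{1..m'-1}. viol n E l (X' i) (Y' i) (Z' i) \<and> b+1 \<le> X' i" using all by (elim conjE)
    have m6: "\<forall>i\<in>{1..m'-1}. \<forall>j\<in>{1..m'-1}. i < j \<longrightarrow> Y' i \<le> X' j" using all by (elim conjE)
    define B where "B i = (if i = 1 then {s..b} else B' (i-1))" for i
    define X where "X i = (if i = 1 then x' else X' (i-1))" for i
    define Y where "Y i = (if i = 1 then b+1 else Y' (i-1))" for i
    define Z where "Z i = (if i = 1 then z else Z' (i-1))" for i
    have Bsub: "B' i \<subseteq> {b+1..n}" if "i \<in> {1..m'}" for i using m4 that by blast
    have P1: "\<forall>i\<in>{1..m'+1}. B i \<noteq> {} \<and> consecutive (B i) \<and> l_homogeneous_set n E l (B i)"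
    proof
      fix i assume i: "i \<in> {1..m'+1}"
      show "B i \<noteq> {} \<and> consecutive (B i) \<and> l_homogeneous_set n E l (B i)"
      proof (cases "i = 1")
        case True then show ?thesis using blk unfolding B_def by simp
      next
        case False then have i1: "i - 1 \<in> {1..m'}" using i by auto
        have "B i = B' (i-1)" using False unfolding B_def by simp
        then show ?thesis using m2 i1 by simp
      qed
    qed
    have P2: "\<forall>i\<in>{1..m'+1}. \<forall>j\<in>{1..m'+1}. i < j \<longrightarrow> set_less (B i) (B j)"
    proof (intro ballI impI)
      fix i j assume ij: "i \<in> {1..m'+1}" "j \<in> {1..m'+1}" "i < j"
      then have j1: "j - 1 \<in> {1..m'}" "j \<noteq> 1" by auto
      have Bj: "B j = B' (j-1)" using j1(2) unfolding B_def by simp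
      show "set_less (B i) (B j)"
      proof (cases "i = 1")
        case True
        then have Bi: "B i = {s..b}" unfolding B_def by simp
        show ?thesis unfolding set_less_def Bi Bj
        proof (intro ballI)
          fix a c assume "a \<in> {s..b}" "c \<in> B' (j-1)"
          then have "a \<le> b" "b+1 \<le> c" using Bsub[OF j1(1)] by auto
          then show "a < c" by simp
        qed
      next
        case False
        then have i1: "i - 1 \<in> {1..m'}" "i - 1 < j - 1" using ij by auto
        have Bi: "B i = B' (i-1)" using False unfolding B_def by simp
        show ?thesis unfolding Bi Bj using m3 i1 j1(1) by blast
      qed
    qed
    have P3: "(\<Union>i\<in>{1..m'+1}. B i) = {s..n}"
    proof -
      have e1: "{1..m'+1} = insert 1 ((\<lambda>i. i+1) ` {1..m'})"
      proof
        show "{1..m'+1} \<subseteq> insert 1 ((\<lambda>i. i+1) ` {1..m'})"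
        proof
          fix i assume i: "i \<in> {1..m'+1}"
          show "i \<in> insert 1 ((\<lambda>i. i+1) ` {1..m'})"
          proof (cases "i = 1")
            case False
            then have "i - 1 \<in> {1..m'}" "i = (i - 1) + 1" using i by auto
            then show ?thesis by blast
          qed simp
        qed
        show "insert 1 ((\<lambda>i. i+1) ` {1..m'}) \<subseteq> {1..m'+1}" by auto
      qed
      have e2: "(\<Union>i\<in>{1..m'}. B (i+1)) = (\<Union>i\<in>{1..m'}. B' i)" unfolding B_def by simp
      have "(\<Union>i\<in>{1..m'+1}. B i) = B 1 \<union> (\<Union>i\<in>{1..m'}. B (i+1))" unfolding e1 by (simp only: UN_insert SUP_image comp_def)
      also have "\<dots> = {s..b} \<union> {b+1..n}" unfolding e2 m4 unfolding B_def by simp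
      also have "\<dots> = {s..n}" using sb bn by auto
      finally show ?thesis .
    qed
    have P4: "\<forall>i\<in>{1..m'+1-1}. viol n E l (X i) (Y i) (Z i) \<and> s \<le> X i"
    proof
      fix i assume i: "i \<in> {1..m'+1-1}"
      show "viol n E l (X i) (Y i) (Z i) \<and> s \<le> X i"
      proof (cases "i = 1")
        case True then show ?thesis using z x' unfolding X_def Y_def Z_def by simp
      next
        case False then have i1: "i - 1 \<in> {1..m'-1}" using i by auto
        have "X i = X' (i-1)" "Y i = Y' (i-1)" "Z i = Z' (i-1)" using False unfolding X_def Y_def Z_def by simp_all
        moreover have "viol n E l (X' (i-1)) (Y' (i-1)) (Z' (i-1))" "b+1 \<le> X' (i-1)" using m5 i1 by blast+
        ultimately show ?thesis using sb by simp
      qed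
    qed
    have P5: "\<forall>i\<in>{1..m'+1-1}. \<forall>j\<in>{1..m'+1-1}. i < j \<longrightarrow> Y i \<le> X j"
    proof (intro ballI impI)
      fix i j assume ij: "i \<in> {1..m'+1-1}" "j \<in> {1..m'+1-1}" "i < j"
      then have j1: "j - 1 \<in> {1..m'-1}" "j \<noteq> 1" by auto
      have Xj: "X j = X' (j-1)" using j1(2) unfolding X_def by simp
      show "Y i \<le> X j"
      proof (cases "i = 1")
        case True
        then have "Y i = b+1" unfolding Y_def by simp
        moreover have "b+1 \<le> X' (j-1)" using m5 j1(1) by blast
        ultimately show ?thesis using Xj by simp
      next
        case False
        then have i1: "i - 1 \<in> {1..m'-1}" "i - 1 < j - 1" using ij by auto
        have Yi: "Y i = Y' (i-1)" using False unfolding Y_def by simp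
        show ?thesis unfolding Yi Xj using m6 i1 j1(1) by blast
      qed
    qed
    show ?thesis
      apply (rule exI[of _ "m'+1"], rule exI[of _ B], rule exI[of _ X], rule exI[of _ Y], rule exI[of _ Z])
      using P1 P2 P3 P4 P5 by simp
  qed
qed

theorem lemma3:
  fixes n k l :: nat and E :: "nat \<Rightarrow> nat \<Rightarrow> bool"
  assumes "k \<ge> 1" and "l \<ge> 1"
    and "ordered_graph n E"
    and "\<not> has_type1 n E k" and "\<not> has_type2 n E k" and "\<not> has_type3 n E k l"
  shows "\<exists>m B. m \<le> 256 * k ^ 4
     \<and> (\<forall>i\<in>{1..m}. B i \<noteq> {} \<and> consecutive (B i) \<and> l_homogeneous_set n E l (B i))
     \<and> (\<forall>i\<in>{1..m}. \<forall>j\<in>{1..m}. i < j \<longrightarrow> set_less (B i) (B j))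
     \<and> (\<Union>i\<in>{1..m}. B i) = {1..n}"
proof (cases "n = 0")
  case True
  show ?thesis by (rule exI[of _ "0::nat"], rule exI[of _ "\<lambda>_::nat. {}"]) (use True in simp)
next
  case False
  then have n1: "1 \<le> n" by simp
  note ex = part[OF assms(3) order_refl[of "1::nat"] n1, where l = l]
  obtain m B X Y Z where all: "1 \<le> (m::nat)
     \<and> (\<forall>i\<in>{1..m}. B i \<noteq> {} \<and> consecutive (B i) \<and> l_homogeneous_set n E l (B i))
     \<and> (\<forall>i\<in>{1..m}. \<forall>j\<in>{1..m}. i < j \<longrightarrow> set_less (B i) (B j))
     \<and> (\<Union>i\<in>{1..m}. B i) = {1..n}
     \<and> (\<forall>i\<in>{1..m-1}. viol n E l (X i) (Y i) (Z i) \<and> 1 \<le> X i)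
     \<and> (\<forall>i\<in>{1..m-1}. \<forall>j\<in>{1..m-1}. i < j \<longrightarrow> Y i \<le> X j)"
    using ex by (elim exE) iprover
  have m1: "1 \<le> m" using all by (elim conjE)
  have m2: "\<forall>i\<in>{1..m}. B i \<noteq> {} \<and> consecutive (B i) \<and> l_homogeneous_set n E l (B i)" using all by (elim conjE)
  have m3: "\<forall>i\<in>{1..m}. \<forall>j\<in>{1..m}. i < j \<longrightarrow> set_less (B i) (B j)" using all by (elim conjE)
  have m4: "(\<Union>i\<in>{1..m}. B i) = {1..n}" using all by (elim conjE)
  have m5: "\<forall>i\<in>{1..m-1}. viol n E l (X i) (Y i) (Z i) \<and> 1 \<le> X i" using all by (elim conjE)
  have m6: "\<forall>i\<in>{1..m-1}. \<forall>j\<in>{1..m-1}. i < j \<longrightarrow> Y i \<le> X j" using all by (elim conjE)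
  have V: "\<forall>i\<in>{1..m-1}. viol n E l (X i) (Y i) (Z i)" using m5 by blast
  have "m - 1 + 1 \<le> 256 * k^4"
    using count_chain[OF V m6 assms(4) assms(5) assms(6) assms(1) assms(2) assms(3)] .
  then have mb: "m \<le> 256 * k^4" using m1 by simp
  show ?thesis
    apply (rule exI[of _ m], rule exI[of _ B])
    using mb m2 m3 m4 by (intro conjI)
qed

end
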